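(* For every set of formulas $\Gamma$ and every formula $\alpha$: if $\Gamma\vDash_{\mathcal{M}_1^0}\alpha$ then $\Gamma\vdash_{L_1^0}\alpha$.
   Context: Formulas are built from a countable set of propositional variables using the unary connectives $\neg$ and $\circ$ and the binary connectives $\land,\lor,\to$. Write $\circ^0\alpha=\alpha$, $\circ^{m+1}\alpha=\circ(\circ^m\alpha)$. The Hilbert calculus mbC has as axiom schemas those of a standard axiomatization of positive classical propositional logic in $\land,\lor,\to$, plus (TND) $\alpha\lor\neg\alpha$ and (bc1) $\circ\alpha\to(\alpha\to(\neg\alpha\to\beta))$; its only rule is modus ponens. mbCciw is mbC plus (ciw) $\circ\alpha\lor(\alpha\land\neg\alpha)$. $L_1^0$ is mbCciw plus the schema $\circ\circ\circ\alpha$. $\Gamma\vdash_L\alpha$ means $\alpha$ is derivable from $\Gamma$ in $L$. Semantics: on $\{0,1\}$ use the Boolean operations $\land,\lor,\to,\sim$. Let $\mathbb{B}_1^0=\{x\in\{0,1\}^3: x_1\lor x_2=1,\ x_3\lor\sim(x_1\land x_2)=1\}$. The multialgebra $\mathcal{B}_1^0$ has $x\# y=\{z\in\mathbb{B}_1^0: z_1=x_1\# y_1\}$ for $\#\in\{\land,\lor,\to\}$, $\neg x=\{z\in\mathbb{B}_1^0: z_1=x_2\}$, $\circ x=\{(\sim(x_1\land x_2),x_3,x_3\land\sim(x_1\land x_2))\}$. $D_1^0=\{x: x_1=1\}$, $\mathcal{M}_1^0=(\mathcal{B}_1^0,D_1^0)$. A valuation over $\mathcal{M}_1^0$ is a map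 $h$ from formulas to $\mathbb{B}_1^0$ with $h(\alpha\#\beta)\in h(\alpha)\# h(\beta)$, $h(\neg\alpha)\in\neg h(\alpha)$, $h(\circ\alpha)\in\circ h(\alpha)$. $\Gamma\vDash_{\mathcal{M}_1^0}\alpha$ iff every valuation $h$ with $h[\Gamma]\subseteq D_1^0$ has $h(\alpha)\in D_1^0$. *)

theory Defs
  imports Main
begin

datatype fm =
    Var nat
  | Neg fm
  | Circ fm
  | And fm fm
  | Or fm fm
  | Imp fm fm

fun circ_pow :: "nat \<Rightarrow> fm \<Rightarrow> fm" where
  "circ_pow 0 a = a"
| "circ_pow (Suc m) a = Circ (circ_pow m a)"

text \<open>Axioms of positive classical propositional logic (the standard axiomatization
  used for mbC by Carnielli--Coniglio), plus TND, bc1, ciw and circ^3.\<close>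
inductive L10_axiom :: "fm \<Rightarrow> bool" where
  Ax1: "L10_axiom (Imp a (Imp b a))"
| Ax2: "L10_axiom (Imp (Imp a b) (Imp (Imp a (Imp b c)) (Imp a c)))"
| Ax3: "L10_axiom (Imp a (Imp b (And a b)))"
| Ax4: "L10_axiom (Imp (And a b) a)"
| Ax5: "L10_axiom (Imp (And a b) b)"
| Ax6: "L10_axiom (Imp a (Or a b))"
| Ax7: "L10_axiom (Imp b (Or a b))"
| Ax8: "L10_axiom (Imp (Imp a c) (Imp (Imp b c) (Imp (Or a b) c)))"
| Ax9: "L10_axiom (Or a (Imp a b))"
| TND: "L10_axiom (Or a (Neg a))"
| bc1: "L10_axiom (Imp (Circ a) (Imp a (Imp (Neg a) b)))"
| ciw: "L10_axiom (Or (Circ a) (And a (Neg a)))"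
| circ3: "L10_axiom (circ_pow 3 a)"

inductive L10_derivable :: "fm set \<Rightarrow> fm \<Rightarrow> bool" where
  premise: "a \<in> \<Gamma> \<Longrightarrow> L10_derivable \<Gamma> a"
| axiom: "L10_axiom a \<Longrightarrow> L10_derivable \<Gamma> a"
| MP: "L10_derivable \<Gamma> a \<Longrightarrow> L10_derivable \<Gamma> (Imp a b) \<Longrightarrow> L10_derivable \<Gamma> b"

text \<open>Elements of {0,1}^3 are triples (x1, x2, x3) of booleans (True = 1).\<close>
type_synonym tri = "bool \<times> bool \<times> bool"

definition in_B10 :: "tri \<Rightarrow> bool" where
  "in_B10 x \<longleftrightarrow> (case x of (x1, x2, x3) \<Rightarrow> (x1 \<or> x2) \<and> (x3 \<or> \<not> (x1 \<and> x2)))"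

definition B10 :: "tri set" where
  "B10 = {x. in_B10 x}"

definition p1 :: "tri \<Rightarrow> bool" where "p1 x = fst x"
definition p2 :: "tri \<Rightarrow> bool" where "p2 x = fst (snd x)"
definition p3 :: "tri \<Rightarrow> bool" where "p3 x = snd (snd x)"

definition mAnd :: "tri \<Rightarrow> tri \<Rightarrow> tri set" where
  "mAnd x y = {z \<in> B10. p1 z = (p1 x \<and> p1 y)}"
definition mOr :: "tri \<Rightarrow> tri \<Rightarrow> tri set" where
  "mOr x y = {z \<in> B10. p1 z = (p1 x \<or> p1 y)}"
definition mImp :: "tri \<Rightarrow> tri \<Rightarrow> tri set" where
  "mImp x y = {z \<in> B10. p1 z = (p1 x \<longrightarrow> p1 y)}"
definition mNeg :: "tri \<Rightarrow> tri set" where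
  "mNeg x = {z \<in> B10. p1 z = p2 x}"
definition mCirc :: "tri \<Rightarrow> tri set" where
  "mCirc x = {(\<not> (p1 x \<and> p2 x), p3 x, p3 x \<and> \<not> (p1 x \<and> p2 x))}"

definition D10 :: "tri set" where
  "D10 = {x \<in> B10. p1 x}"

definition valuation_M10 :: "(fm \<Rightarrow> tri) \<Rightarrow> bool" where
  "valuation_M10 h \<longleftrightarrow>
     (\<forall>a. h a \<in> B10) \<and>
     (\<forall>a b. h (And a b) \<in> mAnd (h a) (h b)) \<and>
     (\<forall>a b. h (Or a b) \<in> mOr (h a) (h b)) \<and>
     (\<forall>a b. h (Imp a b) \<in> mImp (h a) (h b)) \<and>
     (\<forall>a. h (Neg a) \<in> mNeg (h a)) \<and>
     (\<forall>a. h (Circ a) \<in> mCirc (h a))"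

definition consequence_M10 :: "fm set \<Rightarrow> fm \<Rightarrow> bool" where
  "consequence_M10 \<Gamma> a \<longleftrightarrow>
     (\<forall>h. valuation_M10 h \<longrightarrow> h ` \<Gamma> \<subseteq> D10 \<longrightarrow> h a \<in> D10)"

end

theory Submission
  imports Defs
begin

lemma mono_der: "L10_derivable \<Gamma> a \<Longrightarrow> \<Gamma> \<subseteq> \<Delta> \<Longrightarrow> L10_derivable \<Delta> a"
  by (induction rule: L10_derivable.induct) (auto intro: L10_derivable.intros)

lemma imp_self: "L10_derivable \<Gamma> (Imp a a)"
proof -
  have "L10_derivable \<Gamma> (Imp (Imp a (Imp a a)) (Imp (Imp a (Imp (Imp a a) a)) (Imp a a)))"
    by (intro L10_derivable.axiom L10_axiom.intros)
  moreover have "L10_derivable \<Gamma> (Imp a (Imp a a))"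
    by (intro L10_derivable.axiom L10_axiom.intros)
  moreover have "L10_derivable \<Gamma> (Imp a (Imp (Imp a a) a))"
    by (intro L10_derivable.axiom L10_axiom.intros)
  ultimately show ?thesis by (meson L10_derivable.MP)
qed

lemma ax: "L10_axiom a \<Longrightarrow> L10_derivable \<Gamma> a"
  by (rule L10_derivable.axiom)

lemma deduction_aux: "L10_derivable \<Delta> b \<Longrightarrow> \<Delta> = insert a \<Gamma> \<Longrightarrow> L10_derivable \<Gamma> (Imp a b)"
proof (induction rule: L10_derivable.induct)
  case (premise c \<Delta>)
  show ?case
  proof (cases "c = a")
    case True then show ?thesis using imp_self by simp
  next
    case False
    then have "c \<in> \<Gamma>" using premise by auto
    then show ?thesis
      by (meson L10_derivable.MP L10_derivable.premise ax L10_axiom.Ax1)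
  qed
next
  case (axiom c \<Delta>)
  then show ?case by (meson L10_derivable.MP ax L10_axiom.Ax1)
next
  case (MP \<Delta> c d)
  have h1: "L10_derivable \<Gamma> (Imp a c)" and h2: "L10_derivable \<Gamma> (Imp a (Imp c d))"
    using MP by auto
  have "L10_derivable \<Gamma> (Imp (Imp a c) (Imp (Imp a (Imp c d)) (Imp a d)))"
    by (rule ax, rule L10_axiom.Ax2)
  then show ?case using h1 h2 L10_derivable.MP by blast
qed

lemma deduction: "L10_derivable (insert a \<Gamma>) b \<Longrightarrow> L10_derivable \<Gamma> (Imp a b)"
  using deduction_aux by blast

lemma chain_der: "L10_derivable \<Delta> a \<Longrightarrow> \<Delta> = \<Union>C \<Longrightarrow> C \<noteq> {}
   \<Longrightarrow> (\<forall>x\<in>C. \<forall>y\<in>C. x \<subseteq> y \<or> y \<subseteq> x) \<Longrightarrow> \<exists>X\<in>C. L10_derivable X a"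
proof (induction rule: L10_derivable.induct)
  case (premise a \<Gamma>)
  then show ?case by (auto intro: L10_derivable.premise)
next
  case (axiom a \<Gamma>)
  then show ?case by (auto intro: L10_derivable.axiom)
next
  case (MP \<Gamma> a b)
  then obtain X Y where X: "X \<in> C" "L10_derivable X a" and Y: "Y \<in> C" "L10_derivable Y (Imp a b)"
    by blast
  then have "X \<subseteq> Y \<or> Y \<subseteq> X" using MP.prems by blast
  then show ?case
  proof
    assume "X \<subseteq> Y" then show ?case using X Y mono_der L10_derivable.MP by blast
  next
    assume "Y \<subseteq> X" then show ?case using X Y mono_der L10_derivable.MP by blast
  qed
qed

lemma lindenbaum:
  assumes "\<not> L10_derivable \<Gamma> \<alpha>"
  shows "\<exists>\<Delta>. \<Gamma> \<subseteq> \<Delta> \<and> \<not> L10_derivable \<Delta> \<alpha> \<and>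
     (\<forall>\<Delta>'. \<Delta> \<subseteq> \<Delta>' \<and> \<not> L10_derivable \<Delta>' \<alpha> \<longrightarrow> \<Delta>' = \<Delta>)"
proof -
  let ?A = "{\<Delta>. \<Gamma> \<subseteq> \<Delta> \<and> \<not> L10_derivable \<Delta> \<alpha>}"
  have "\<exists>M\<in>?A. \<forall>X\<in>?A. M \<subseteq> X \<longrightarrow> X = M"
  proof (rule subset_Zorn_nonempty)
    have "\<Gamma> \<in> ?A" using assms by simp
    then show "?A \<noteq> {}" by (rule ex_in_conv[THEN iffD1, OF exI])
  next
    fix C assume ne: "C \<noteq> {}" and ch: "subset.chain ?A C"
    have sub: "C \<subseteq> ?A" using ch unfolding subset.chain_def by simp
    have cmp: "\<forall>x\<in>C. \<forall>y\<in>C. x \<subseteq> y \<or> y \<subseteq> x"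
    proof (intro ballI)
      fix x y assume "x \<in> C" "y \<in> C"
      then have "x \<subset> y \<or> x = y \<or> y \<subset> x \<or> y = x" using ch by (simp add: subset.chain_def)
      then show "x \<subseteq> y \<or> y \<subseteq> x" by (elim disjE) auto
    qed
    have "\<not> L10_derivable (\<Union>C) \<alpha>"
    proof
      assume "L10_derivable (\<Union>C) \<alpha>"
      then obtain X where X: "X \<in> C" "L10_derivable X \<alpha>" using chain_der[OF _ refl ne cmp] by metis
      have "X \<in> ?A" using sub X(1) by (rule subsetD)
      then show False using X by simp
    qed
    moreover have "\<Gamma> \<subseteq> \<Union>C"
    proof -
      obtain X where X: "X \<in> C" using ne by auto
      have "X \<in> ?A" using sub X by (rule subsetD)
      then have "\<Gamma> \<subseteq> X" by simp
      then show ?thesis using X by auto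
    qed
    ultimately show "\<Union>C \<in> ?A" by simp
  qed
  then obtain M where M: "M \<in> ?A" and mx: "\<forall>X\<in>?A. M \<subseteq> X \<longrightarrow> X = M" by (rule bexE)
  show ?thesis
  proof (intro exI conjI allI impI)
    show "\<Gamma> \<subseteq> M" using M by simp
    show "\<not> L10_derivable M \<alpha>" using M by simp
    fix D assume D: "M \<subseteq> D \<and> \<not> L10_derivable D \<alpha>"
    then have "D \<in> ?A" using M by auto
    then show "D = M" using mx D by simp
  qed
qed

locale maxset =
  fixes \<Delta> \<alpha>
  assumes nd: "\<not> L10_derivable \<Delta> \<alpha>"
    and mx: "\<And>\<Delta>'. \<Delta> \<subseteq> \<Delta>' \<Longrightarrow> \<not> L10_derivable \<Delta>' \<alpha> \<Longrightarrow> \<Delta>' = \<Delta>"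
begin

lemma notin_der: "b \<notin> \<Delta> \<Longrightarrow> L10_derivable \<Delta> (Imp b \<alpha>)"
proof -
  assume b: "b \<notin> \<Delta>"
  have "insert b \<Delta> \<noteq> \<Delta>" using b by auto
  then have "L10_derivable (insert b \<Delta>) \<alpha>" using mx[of "insert b \<Delta>"] by auto
  then show ?thesis by (rule deduction)
qed

lemma closed: "L10_derivable \<Delta> b \<Longrightarrow> b \<in> \<Delta>"
proof (rule ccontr)
  assume "L10_derivable \<Delta> b" "b \<notin> \<Delta>"
  then have "L10_derivable \<Delta> \<alpha>" using notin_der L10_derivable.MP by metis
  then show False using nd by simp
qed

lemma mem_der: "b \<in> \<Delta> \<Longrightarrow> L10_derivable \<Delta> b"
  by (rule L10_derivable.premise)

lemma ax_in: "L10_axiom b \<Longrightarrow> b \<in> \<Delta>"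
  by (rule closed, rule ax)

lemma mp_in: "a \<in> \<Delta> \<Longrightarrow> Imp a b \<in> \<Delta> \<Longrightarrow> b \<in> \<Delta>"
  by (rule closed, rule L10_derivable.MP[OF mem_der mem_der])

lemma mp2_in: "a \<in> \<Delta> \<Longrightarrow> b \<in> \<Delta> \<Longrightarrow> Imp a (Imp b c) \<in> \<Delta> \<Longrightarrow> c \<in> \<Delta>"
  using mp_in by metis

lemma or_in: "Or a b \<in> \<Delta> \<longleftrightarrow> a \<in> \<Delta> \<or> b \<in> \<Delta>"
proof
  assume o: "Or a b \<in> \<Delta>"
  show "a \<in> \<Delta> \<or> b \<in> \<Delta>"
  proof (rule ccontr)
    assume "\<not> ?thesis"
    then have 1: "Imp a \<alpha> \<in> \<Delta>" and 2: "Imp b \<alpha> \<in> \<Delta>" using notin_der closed by auto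
    have 3: "Imp (Imp a \<alpha>) (Imp (Imp b \<alpha>) (Imp (Or a b) \<alpha>)) \<in> \<Delta>"
      by (rule ax_in, rule L10_axiom.Ax8)
    have "\<alpha> \<in> \<Delta>" using mp_in[OF o mp2_in[OF 1 2 3]] .
    then show False using nd mem_der by auto
  qed
next
  assume "a \<in> \<Delta> \<or> b \<in> \<Delta>"
  then show "Or a b \<in> \<Delta>"
  proof
    assume "a \<in> \<Delta>" then show ?thesis using mp_in ax_in L10_axiom.Ax6 by metis
  next
    assume "b \<in> \<Delta>" then show ?thesis using mp_in ax_in L10_axiom.Ax7 by metis
  qed
qed

lemma and_in: "And a b \<in> \<Delta> \<longleftrightarrow> a \<in> \<Delta> \<and> b \<in> \<Delta>"
proof
  assume h: "And a b \<in> \<Delta>"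
  have "Imp (And a b) a \<in> \<Delta>" "Imp (And a b) b \<in> \<Delta>"
    by (rule ax_in, rule L10_axiom.Ax4) (rule ax_in, rule L10_axiom.Ax5)
  then show "a \<in> \<Delta> \<and> b \<in> \<Delta>" using h mp_in by metis
next
  assume h: "a \<in> \<Delta> \<and> b \<in> \<Delta>"
  have "Imp a (Imp b (And a b)) \<in> \<Delta>" by (rule ax_in, rule L10_axiom.Ax3)
  then show "And a b \<in> \<Delta>" using h mp2_in by metis
qed

lemma imp_in: "Imp a b \<in> \<Delta> \<longleftrightarrow> (a \<in> \<Delta> \<longrightarrow> b \<in> \<Delta>)"
proof
  assume "Imp a b \<in> \<Delta>" then show "a \<in> \<Delta> \<longrightarrow> b \<in> \<Delta>" using mp_in by metis
next
  assume h: "a \<in> \<Delta> \<longrightarrow> b \<in> \<Delta>"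
  show "Imp a b \<in> \<Delta>"
  proof (cases "b \<in> \<Delta>")
    case True
    have "Imp b (Imp a b) \<in> \<Delta>" by (rule ax_in, rule L10_axiom.Ax1)
    then show ?thesis using True mp_in by metis
  next
    case False
    then have "a \<notin> \<Delta>" using h by simp
    moreover have "Or a (Imp a b) \<in> \<Delta>" by (rule ax_in, rule L10_axiom.Ax9)
    ultimately show ?thesis using or_in by simp
  qed
qed

lemma tnd_in: "a \<in> \<Delta> \<or> Neg a \<in> \<Delta>"
proof -
  have "Or a (Neg a) \<in> \<Delta>" by (rule ax_in, rule L10_axiom.TND)
  then show ?thesis using or_in by simp
qed

lemma bc_in: "\<not> (Circ a \<in> \<Delta> \<and> a \<in> \<Delta> \<and> Neg a \<in> \<Delta>)"
proof
  assume h: "Circ a \<in> \<Delta> \<and> a \<in> \<Delta> \<and> Neg a \<in> \<Delta>"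
  have "Imp (Circ a) (Imp a (Imp (Neg a) \<alpha>)) \<in> \<Delta>" by (rule ax_in, rule L10_axiom.bc1)
  then have "\<alpha> \<in> \<Delta>" using h mp_in by metis
  then show False using nd mem_der by auto
qed

lemma circ_in: "Circ a \<in> \<Delta> \<longleftrightarrow> \<not> (a \<in> \<Delta> \<and> Neg a \<in> \<Delta>)"
proof -
  have "Or (Circ a) (And a (Neg a)) \<in> \<Delta>" by (rule ax_in, rule L10_axiom.ciw)
  then have "Circ a \<in> \<Delta> \<or> (a \<in> \<Delta> \<and> Neg a \<in> \<Delta>)" using or_in and_in by simp
  then show ?thesis using bc_in[of a] by auto
qed

lemma circ3_in: "Circ (Circ (Circ a)) \<in> \<Delta>"
proof -
  have "circ_pow 3 a \<in> \<Delta>" by (rule ax_in, rule L10_axiom.circ3)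
  then show ?thesis by (simp add: numeral_3_eq_3)
qed

definition hv :: "fm \<Rightarrow> tri" where
  "hv b = (b \<in> \<Delta>, Neg b \<in> \<Delta>, Neg (Circ b) \<in> \<Delta>)"

lemma hv_B: "hv b \<in> B10"
  unfolding hv_def B10_def in_B10_def
  using tnd_in[of b] tnd_in[of "Circ b"] circ_in[of b] by auto

lemma hv_val: "valuation_M10 hv"
  unfolding valuation_M10_def
proof (intro conjI allI)
  fix a b
  show "hv a \<in> B10" by (rule hv_B)
  show "hv (And a b) \<in> mAnd (hv a) (hv b)"
    using hv_B[of "And a b"] unfolding mAnd_def by (simp add: hv_def p1_def and_in)
  show "hv (Or a b) \<in> mOr (hv a) (hv b)"
    using hv_B[of "Or a b"] unfolding mOr_def by (simp add: hv_def p1_def or_in)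
  show "hv (Imp a b) \<in> mImp (hv a) (hv b)"
    using hv_B[of "Imp a b"] unfolding mImp_def by (simp add: hv_def p1_def imp_in)
  show "hv (Neg a) \<in> mNeg (hv a)"
    using hv_B[of "Neg a"] unfolding mNeg_def by (simp add: hv_def p1_def p2_def)
next
  fix a
  have c1: "Circ a \<in> \<Delta> \<longleftrightarrow> \<not> (a \<in> \<Delta> \<and> Neg a \<in> \<Delta>)" by (rule circ_in)
  have c2: "Circ (Circ a) \<in> \<Delta> \<longleftrightarrow> \<not> (Circ a \<in> \<Delta> \<and> Neg (Circ a) \<in> \<Delta>)" by (rule circ_in)
  have c3: "Circ (Circ (Circ a)) \<in> \<Delta> \<longleftrightarrow> \<not> (Circ (Circ a) \<in> \<Delta> \<and> Neg (Circ (Circ a)) \<in> \<Delta>)"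
    by (rule circ_in)
  have t: "Circ (Circ a) \<in> \<Delta> \<or> Neg (Circ (Circ a)) \<in> \<Delta>" by (rule tnd_in)
  show "hv (Circ a) \<in> mCirc (hv a)"
    unfolding mCirc_def hv_def p1_def p2_def p3_def
    using c1 c2 c3 t circ3_in[of a] by auto
qed

end

theorem theorem6:
  fixes \<Gamma> :: "fm set" and \<alpha> :: fm
  assumes "consequence_M10 \<Gamma> \<alpha>"
  shows "L10_derivable \<Gamma> \<alpha>"
proof (rule ccontr)
  assume "\<not> L10_derivable \<Gamma> \<alpha>"
  then obtain \<Delta> where G: "\<Gamma> \<subseteq> \<Delta>" and nd: "\<not> L10_derivable \<Delta> \<alpha>"
    and mx: "\<forall>\<Delta>'. \<Delta> \<subseteq> \<Delta>' \<and> \<not> L10_derivable \<Delta>' \<alpha> \<longrightarrow> \<Delta>' = \<Delta>"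
    using lindenbaum by blast
  interpret maxset \<Delta> \<alpha> using nd mx by unfold_locales blast+
  have "hv ` \<Gamma> \<subseteq> D10" using G hv_B by (auto simp: D10_def hv_def p1_def)
  then have "hv \<alpha> \<in> D10" using assms hv_val unfolding consequence_M10_def by blast
  then have "\<alpha> \<in> \<Delta>" by (simp add: D10_def hv_def p1_def)
  then show False using nd L10_derivable.premise by blast
qed

end
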